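(* Equip the set $\mathcal{SP}$ of shape measures with the topology induced by the Wasserstein distance $W$. Then the map $F_{\mathrm{B}}:\mathrm{B}\to\mathcal{SP}$, $[c]\mapsto F(c)$, is continuous.
   Context: $\mathrm{Emb}$ is the set of $C^\infty$-embeddings $S^1\to\mathbb{R}^2$, an open subset of $C^\infty(S^1,\mathbb{R}^2)$ with the topology of uniform convergence in all derivatives; $\mathrm{Diff}$ is the group of $C^\infty$-diffeomorphisms of $S^1$; $\mathrm{B}=\mathrm{Emb}/\mathrm{Diff}$ (classes $[c]=\{c\circ\varphi\}$) is the quotient manifold, with the quotient topology. $\Omega(c)$ is the open region enclosed by $c$, $F(c)(A)=|\Omega(c)|^{-1}|A\cap\Omega(c)|$. A shape measure is $\mu(A)=|\Omega|^{-1}|A\cap\Omega|$ for $\Omega$ open with $0<|\Omega|<\infty$ and connected $C^\infty$ boundary. $W(\mu_1,\mu_2)=(\inf_\gamma\int\|x-y\|^2d\gamma)^{1/2}$, infimum over couplings $\gamma$ of $\mu_1$ and $\mu_2$. *)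

theory Defs
  imports "HOL-Probability.Probability"
begin

fun Dk :: "nat \<Rightarrow> (real \<Rightarrow> real^2) \<Rightarrow> real \<Rightarrow> real^2" where
  "Dk 0 g = g"
| "Dk (Suc k) g = (\<lambda>t. vector_derivative (Dk k g) (at t))"

definition smooth_on :: "real set \<Rightarrow> (real \<Rightarrow> real^2) \<Rightarrow> bool" where
  "smooth_on S g \<longleftrightarrow> (\<forall>k. \<forall>t\<in>S. Dk k g differentiable (at t))"

definition S1 :: "(real^2) set" where
  "S1 = sphere 0 1"

text \<open>Standard covering map R -> S1; a map on S1 is smooth iff its composition with it is.\<close>
definition ecirc :: "real \<Rightarrow> real^2" where
  "ecirc t = vector [cos (2 * pi * t), sin (2 * pi * t)]"

text \<open>C-infinity maps S1 -> R2 (represented extensionally on S1).\<close>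
definition Cinf :: "(real^2 \<Rightarrow> real^2) set" where
  "Cinf = {c. c \<in> extensional S1 \<and> smooth_on UNIV (c \<circ> ecirc)}"

text \<open>Embeddings: injective immersions of the compact manifold S1.\<close>
definition Emb :: "(real^2 \<Rightarrow> real^2) set" where
  "Emb = {c \<in> Cinf. inj_on c S1 \<and> (\<forall>t. vector_derivative (c \<circ> ecirc) (at t) \<noteq> 0)}"

text \<open>Diffeomorphisms of S1 (smooth bijections S1 -> S1 with smooth inverse; smoothness
  as maps into R2, S1 being an embedded submanifold).\<close>
definition Diff :: "(real^2 \<Rightarrow> real^2) set" where
  "Diff = {\<phi>. bij_betw \<phi> S1 S1 \<and> smooth_on UNIV (\<phi> \<circ> ecirc)
              \<and> smooth_on UNIV (inv_into S1 \<phi> \<circ> ecirc)}"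

text \<open>Topology of uniform convergence in all derivatives on C-infinity(S1,R2):
  generated by the seminorm balls.\<close>
definition Cinf_top :: "(real^2 \<Rightarrow> real^2) topology" where
  "Cinf_top = topology_generated_by
     {{c \<in> Cinf. (SUP t. norm (Dk k (c \<circ> ecirc) t - Dk k (c0 \<circ> ecirc) t)) < r}
       | k c0 r. c0 \<in> Cinf \<and> r > 0}"

definition Emb_top :: "(real^2 \<Rightarrow> real^2) topology" where
  "Emb_top = subtopology Cinf_top Emb"

definition cls :: "(real^2 \<Rightarrow> real^2) \<Rightarrow> (real^2 \<Rightarrow> real^2) set" where
  "cls c = {restrict (c \<circ> \<phi>) S1 | \<phi>. \<phi> \<in> Diff}"

definition Bset :: "(real^2 \<Rightarrow> real^2) set set" where
  "Bset = cls ` Emb"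

definition B_top :: "(real^2 \<Rightarrow> real^2) set topology" where
  "B_top = topology (\<lambda>U. U \<subseteq> Bset \<and> openin Emb_top {c \<in> Emb. cls c \<in> U})"

definition Omega :: "(real^2 \<Rightarrow> real^2) \<Rightarrow> (real^2) set" where
  "Omega c = \<Union>{C \<in> components (- (c ` S1)). bounded C}"

definition F :: "(real^2 \<Rightarrow> real^2) \<Rightarrow> (real^2) measure" where
  "F c = uniform_measure lborel (Omega c)"

definition FB :: "(real^2 \<Rightarrow> real^2) set \<Rightarrow> (real^2) measure" where
  "FB X = F (SOME c. c \<in> X)"

text \<open>Embedded 1-dimensional C-infinity submanifold of R2 (local regular parametrisations
  that are homeomorphisms onto open pieces).\<close>
definition smooth_curve_set :: "(real^2) set \<Rightarrow> bool" where
  "smooth_curve_set M \<longleftrightarrow> (\<forall>p\<in>M. \<exists>U a b \<gamma>. open U \<and> p \<in> U \<and> a < b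
      \<and> smooth_on {a<..<b} \<gamma> \<and> (\<forall>t\<in>{a<..<b}. vector_derivative \<gamma> (at t) \<noteq> 0)
      \<and> (\<exists>g. homeomorphism {a<..<b} (M \<inter> U) \<gamma> g))"

definition SP :: "(real^2) measure set" where
  "SP = {uniform_measure lborel \<Omega> | \<Omega>. open \<Omega> \<and> 0 < emeasure lborel \<Omega>
          \<and> emeasure lborel \<Omega> < \<infinity> \<and> connected (frontier \<Omega>) \<and> smooth_curve_set (frontier \<Omega>)}"

definition couplings :: "(real^2) measure \<Rightarrow> (real^2) measure \<Rightarrow> ((real^2) \<times> (real^2)) measure set" where
  "couplings \<mu> \<nu> = {\<gamma>. sets \<gamma> = sets (borel \<Otimes>\<^sub>M borel) \<and> prob_space \<gamma>
       \<and> distr \<gamma> borel fst = \<mu> \<and> distr \<gamma> borel snd = \<nu>}"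

definition W2sq :: "(real^2) measure \<Rightarrow> (real^2) measure \<Rightarrow> ennreal" where
  "W2sq \<mu> \<nu> = (INF \<gamma>\<in>couplings \<mu> \<nu>. \<integral>\<^sup>+ z. ennreal ((norm (fst z - snd z))\<^sup>2) \<partial>\<gamma>)"

definition W :: "(real^2) measure \<Rightarrow> (real^2) measure \<Rightarrow> ennreal" where
  "W \<mu> \<nu> = (if W2sq \<mu> \<nu> = \<infinity> then \<infinity> else ennreal (sqrt (enn2real (W2sq \<mu> \<nu>))))"

definition SP_top :: "(real^2) measure topology" where
  "SP_top = topology (\<lambda>U. U \<subseteq> SP \<and>
      (\<forall>\<mu>\<in>U. \<exists>\<epsilon>>0. {\<nu> \<in> SP. W \<mu> \<nu> < ennreal \<epsilon>} \<subseteq> U))"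

lemma istopology_B: "istopology (\<lambda>U. U \<subseteq> Bset \<and> openin Emb_top {c \<in> Emb. cls c \<in> U})"
proof -
  have 1: "{c \<in> Emb. cls c \<in> S \<inter> T} = {c \<in> Emb. cls c \<in> S} \<inter> {c \<in> Emb. cls c \<in> T}" for S T
    by auto
  have 2: "{c \<in> Emb. cls c \<in> \<Union>K} = \<Union>((\<lambda>U. {c \<in> Emb. cls c \<in> U}) ` K)" for K
    by auto
  have I: "S \<inter> T \<subseteq> Bset \<and> openin Emb_top {c \<in> Emb. cls c \<in> S \<inter> T}"
    if "S \<subseteq> Bset \<and> openin Emb_top {c \<in> Emb. cls c \<in> S}"
      "T \<subseteq> Bset \<and> openin Emb_top {c \<in> Emb. cls c \<in> T}" for S T
    using that unfolding 1 by (simp add: le_infI1 openin_Int)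
  have U: "\<Union>K \<subseteq> Bset \<and> openin Emb_top {c \<in> Emb. cls c \<in> \<Union>K}"
    if a: "\<forall>S\<in>K. S \<subseteq> Bset \<and> openin Emb_top {c \<in> Emb. cls c \<in> S}" for K
  proof -
    have "\<Union>K \<subseteq> Bset" using a by blast
    moreover have "openin Emb_top (\<Union>((\<lambda>U. {c \<in> Emb. cls c \<in> U}) ` K))"
      using a by (intro openin_Union) blast
    ultimately show ?thesis unfolding 2 by blast
  qed
  show ?thesis unfolding istopology_def using I U by blast
qed

lemma istopology_SP: "istopology (\<lambda>U. U \<subseteq> SP \<and>
      (\<forall>\<mu>\<in>U. \<exists>\<epsilon>>0. {\<nu> \<in> SP. W \<mu> \<nu> < ennreal \<epsilon>} \<subseteq> U))"
proof -
  have I: "S \<inter> T \<subseteq> SP \<and> (\<forall>\<mu>\<in>S \<inter> T. \<exists>\<epsilon>>0. {\<nu> \<in> SP. W \<mu> \<nu> < ennreal \<epsilon>} \<subseteq> S \<inter> T)"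
    if S: "S \<subseteq> SP \<and> (\<forall>\<mu>\<in>S. \<exists>\<epsilon>>0. {\<nu> \<in> SP. W \<mu> \<nu> < ennreal \<epsilon>} \<subseteq> S)"
    and T: "T \<subseteq> SP \<and> (\<forall>\<mu>\<in>T. \<exists>\<epsilon>>0. {\<nu> \<in> SP. W \<mu> \<nu> < ennreal \<epsilon>} \<subseteq> T)" for S T
  proof (intro conjI ballI)
    show "S \<inter> T \<subseteq> SP" using S by auto
    fix \<mu> assume "\<mu> \<in> S \<inter> T"
    then obtain e1 e2 where e: "e1 > 0" "{\<nu> \<in> SP. W \<mu> \<nu> < ennreal e1} \<subseteq> S"
      "e2 > 0" "{\<nu> \<in> SP. W \<mu> \<nu> < ennreal e2} \<subseteq> T" using S T by blast
    have m: "ennreal (min e1 e2) \<le> ennreal e1" "ennreal (min e1 e2) \<le> ennreal e2"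
      by (simp_all add: ennreal_leI)
    have "{\<nu> \<in> SP. W \<mu> \<nu> < ennreal (min e1 e2)} \<subseteq> S \<inter> T"
    proof
      fix x assume x: "x \<in> {\<nu> \<in> SP. W \<mu> \<nu> < ennreal (min e1 e2)}"
      then have "W \<mu> x < ennreal e1" "W \<mu> x < ennreal e2"
        using m order_less_le_trans by blast+
      then show "x \<in> S \<inter> T" using x e by blast
    qed
    then show "\<exists>\<epsilon>>0. {\<nu> \<in> SP. W \<mu> \<nu> < ennreal \<epsilon>} \<subseteq> S \<inter> T"
      using e by (intro exI[of _ "min e1 e2"]) auto
  qed
  have U: "\<Union>K \<subseteq> SP \<and> (\<forall>\<mu>\<in>\<Union>K. \<exists>\<epsilon>>0. {\<nu> \<in> SP. W \<mu> \<nu> < ennreal \<epsilon>} \<subseteq> \<Union>K)"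
    if K: "\<forall>S\<in>K. S \<subseteq> SP \<and> (\<forall>\<mu>\<in>S. \<exists>\<epsilon>>0. {\<nu> \<in> SP. W \<mu> \<nu> < ennreal \<epsilon>} \<subseteq> S)" for K
  proof (intro conjI ballI)
    show "\<Union>K \<subseteq> SP" using K by blast
  next
    fix \<mu> assume "\<mu> \<in> \<Union>K"
    then obtain S where "S \<in> K" "\<mu> \<in> S" by blast
    then obtain e where "e > 0" "{\<nu> \<in> SP. W \<mu> \<nu> < ennreal e} \<subseteq> S"
      using K by blast
    then show "\<exists>\<epsilon>>0. {\<nu> \<in> SP. W \<mu> \<nu> < ennreal \<epsilon>} \<subseteq> \<Union>K"
      using \<open>S \<in> K\<close> by blast
  qed
  show ?thesis unfolding istopology_def using I U by blast
qed

end

theory Submission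
  imports Defs "HOL-Complex_Analysis.Complex_Analysis"
begin

section \<open>Identification of real^2 with complex\<close>

definition r2c :: "real^2 \<Rightarrow> complex" where
  "r2c x = Complex (x$1) (x$2)"

definition c2r :: "complex \<Rightarrow> real^2" where
  "c2r z = vector [Re z, Im z]"

lemma vec2_eq: "(x::real^2) = vector [x$1, x$2]"
  by (simp add: vec_eq_iff forall_2)

lemma c2r_r2c [simp]: "c2r (r2c x) = x"
  by (simp add: c2r_def r2c_def vec_eq_iff forall_2)

lemma r2c_c2r [simp]: "r2c (c2r z) = z"
  by (simp add: c2r_def r2c_def complex_eq_iff)

lemma linear_r2c: "linear r2c"
  by (auto simp: linear_iff r2c_def complex_eq_iff)

lemma linear_c2r: "linear c2r"
  by (auto simp: linear_iff c2r_def vec_eq_iff forall_2)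

lemma norm_r2c [simp]: "norm (r2c x) = norm x"
  by (simp add: r2c_def norm_vec_def L2_set_def sum_2 cmod_def)

lemma inj_r2c: "inj r2c"
  by (metis c2r_r2c injI)

lemma bij_r2c: "bij r2c"
  by (metis bijI inj_r2c r2c_c2r surjI)

lemma continuous_on_r2c [continuous_intros]: "continuous_on S r2c"
  by (simp add: linear_continuous_on linear_linear linear_r2c)

lemma continuous_on_c2r [continuous_intros]: "continuous_on S c2r"
  by (simp add: linear_continuous_on linear_linear linear_c2r)

lemma r2c_minus: "r2c x - r2c y = r2c (x - y)"
  using linear_diff[OF linear_r2c] by simp

lemma dist_r2c [simp]: "dist (r2c x) (r2c y) = dist x y"
  by (simp add: dist_norm r2c_minus)


lemma ecirc_periodic [simp]: "ecirc (t + 1) = ecirc t"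
proof -
  have "2 * pi * (t + 1) = 2 * pi * t + 2 * pi" by (simp add: algebra_simps)
  then show ?thesis by (simp add: ecirc_def)
qed

lemma ecirc_periodic_int: "ecirc (t + of_int n) = ecirc t"
proof -
  have "2 * pi * (t + of_int n) = 2 * pi * t + 2 * pi * of_int n" by (simp add: algebra_simps)
  moreover have "cos (x + 2 * pi * of_int n) = cos x" "sin (x + 2 * pi * of_int n) = sin x" for x
    using sin_cos_eq_iff[of "x + 2 * pi * of_int n" x] by auto
  ultimately show ?thesis by (simp add: ecirc_def)
qed

lemma norm_ecirc [simp]: "norm (ecirc t) = 1"
  by (simp add: ecirc_def norm_vec_def L2_set_def sum_2)

lemma ecirc_in_S1 [simp]: "ecirc t \<in> S1"
  by (simp add: S1_def)

lemma ecirc_eq_iff: "ecirc s = ecirc t \<longleftrightarrow> (\<exists>n::int. s = t + of_int n)"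
proof
  assume "ecirc s = ecirc t"
  then have "cos (2 * pi * s) = cos (2 * pi * t)" "sin (2 * pi * s) = sin (2 * pi * t)"
    by (metis ecirc_def vector_2)+
  then obtain n :: int where "2 * pi * s = 2 * pi * t + 2 * pi * of_int n"
    using sin_cos_eq_iff by metis
  then have "2 * pi * (s - t - of_int n) = 0" by (simp add: algebra_simps)
  then have "s = t + of_int n" by simp
  then show "\<exists>n::int. s = t + of_int n" by blast
next
  assume "\<exists>n::int. s = t + of_int n"
  then show "ecirc s = ecirc t" using ecirc_periodic_int by auto
qed

lemma S1_ecirc: "S1 = ecirc ` {0..<1}"
proof
  show "ecirc ` {0..<1} \<subseteq> S1" by auto
  show "S1 \<subseteq> ecirc ` {0..<1}"
  proof
    fix x :: "real^2" assume "x \<in> S1"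
    then have "norm x = 1" by (simp add: S1_def)
    then have "(x$1)\<^sup>2 + (x$2)\<^sup>2 = 1"
      by (simp add: norm_vec_def L2_set_def sum_2)
    then obtain t where t: "0 \<le> t" "t < 2*pi" "x$1 = cos t" "x$2 = sin t"
      using sincos_total_2pi by blast
    define s where "s = t / (2*pi)"
    have "2 * pi * s = t" by (simp add: s_def)
    then have "ecirc s = x" using t by (simp add: ecirc_def vec_eq_iff forall_2)
    moreover have "s \<in> {0..<1}" using t by (simp add: s_def field_simps)
    ultimately show "x \<in> ecirc ` {0..<1}" by blast
  qed
qed

lemma S1_ecirc_closed: "S1 = ecirc ` {0..1}"
proof
  have "{0..<1} \<subseteq> {0..(1::real)}" by auto
  then show "S1 \<subseteq> ecirc ` {0..1}" using S1_ecirc by (metis image_mono)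
  show "ecirc ` {0..1} \<subseteq> S1" by auto
qed

lemma smooth_on_diff: "smooth_on S g \<Longrightarrow> t \<in> S \<Longrightarrow> g differentiable (at t)"
  unfolding smooth_on_def by (metis Dk.simps(1))

lemma Cinf_diff: "c \<in> Cinf \<Longrightarrow> (c \<circ> ecirc) differentiable (at t)"
  unfolding Cinf_def using smooth_on_diff by blast

lemma Cinf_cont: "c \<in> Cinf \<Longrightarrow> continuous_on S (c \<circ> ecirc)"
  by (meson Cinf_diff continuous_at_imp_continuous_on differentiable_imp_continuous_within)

lemma Cinf_periodic: "(c \<circ> ecirc) (t + 1) = (c \<circ> ecirc) t"
  by simp

lemma Cinf_image: "c ` S1 = (c \<circ> ecirc) ` {0..1}"
  using S1_ecirc_closed by (metis image_comp)

lemma Emb_inj: "c \<in> Emb \<Longrightarrow> (c \<circ> ecirc) s = (c \<circ> ecirc) t \<Longrightarrow> \<exists>n::int. s = t + of_int n"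
  unfolding Emb_def using ecirc_eq_iff by (auto dest: inj_onD)


lemma homeo_r2c: "homeomorphism (- S) (- (r2c ` S)) r2c c2r"
proof -
  have 1: "r2c ` (- S) = - (r2c ` S)" using bij_r2c by (simp add: bij_image_Compl_eq)
  have "c2r ` r2c ` (- S) = - S" by (simp add: image_comp)
  then have 2: "c2r ` (- (r2c ` S)) = - S" using 1 by simp
  show ?thesis unfolding homeomorphism_def using 1 2
    by (auto intro!: continuous_intros)
qed

lemma bounded_r2c_iff: "bounded (r2c ` X) \<longleftrightarrow> bounded X"
proof
  assume "bounded (r2c ` X)"
  then have "bounded (c2r ` r2c ` X)"
    by (simp add: bounded_linear_image linear_c2r linear_linear)
  then show "bounded X" by (simp add: image_comp)
qed (simp add: bounded_linear_image linear_r2c linear_linear)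

lemma inside_r2c: "inside (r2c ` S) = r2c ` inside S"
proof -
  have cc: "connected_component_set (- (r2c ` S)) (r2c x) = r2c ` connected_component_set (- S) x"
    if "x \<notin> S" for x
    using connected_component_set_homeomorphism[OF homeo_r2c, of x S] that by simp
  show ?thesis
  proof
    show "inside (r2c ` S) \<subseteq> r2c ` inside S"
    proof
      fix z assume z: "z \<in> inside (r2c ` S)"
      define x where "x = c2r z"
      have zx: "z = r2c x" by (simp add: x_def)
      have "x \<notin> S" using z zx by (auto simp: inside_def)
      then have "x \<in> inside S" using z zx cc bounded_r2c_iff by (simp add: inside_def)
      then show "z \<in> r2c ` inside S" using zx by blast
    qed
  next
    show "r2c ` inside S \<subseteq> inside (r2c ` S)"
    proof
      fix z assume "z \<in> r2c ` inside S"
      then obtain x where x: "x \<in> inside S" "z = r2c x" by blast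
      then have "x \<notin> S" by (auto simp: inside_def)
      then have "r2c x \<notin> r2c ` S" using inj_r2c by (auto dest: injD)
      then show "z \<in> inside (r2c ` S)" using x cc[OF \<open>x \<notin> S\<close>] bounded_r2c_iff
        by (simp add: inside_def)
    qed
  qed
qed

lemma frontier_r2c: "frontier (r2c ` X) = r2c ` frontier X"
proof -
  have comp: "- (r2c ` X) = r2c ` (- X)"
    using bij_r2c by (simp add: bij_image_Compl_eq)
  have "frontier (r2c ` X) = closure (r2c ` X) \<inter> closure (r2c ` (- X))"
    by (simp add: frontier_closures comp)
  also have "\<dots> = r2c ` closure X \<inter> r2c ` closure (- X)"
    by (simp add: closure_injective_linear_image[OF linear_r2c inj_r2c])
  also have "\<dots> = r2c ` (closure X \<inter> closure (- X))"
    using inj_r2c by (simp add: image_Int)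
  finally show ?thesis by (simp add: frontier_closures)
qed

lemma Omega_inside: "\<Union>{C \<in> components (- K). bounded C} = inside K"
proof
  show "\<Union>{C \<in> components (- K). bounded C} \<subseteq> inside K"
  proof
    fix y assume "y \<in> \<Union>{C \<in> components (- K). bounded C}"
    then obtain x where x: "x \<in> - K" "bounded (connected_component_set (- K) x)"
      "y \<in> connected_component_set (- K) x"
      by (auto simp: components_iff)
    then have "connected_component_set (- K) y = connected_component_set (- K) x"
      by (meson connected_component_eq mem_Collect_eq)
    then show "y \<in> inside K" using x
      by (auto simp: inside_def dest: connected_component_in)
  qed
next
  show "inside K \<subseteq> \<Union>{C \<in> components (- K). bounded C}"
  proof
    fix y assume "y \<in> inside K"
    then have "y \<in> - K" "bounded (connected_component_set (- K) y)"
      by (auto simp: inside_def)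
    then show "y \<in> \<Union>{C \<in> components (- K). bounded C}"
      by (auto simp: components_iff intro!: exI[of _ "connected_component_set (- K) y"])
  qed
qed

lemma Omega_eq: "Omega c = inside (c ` S1)"
  by (simp add: Omega_def Omega_inside)

section \<open>Jordan curve theorem for embeddings\<close>

definition qpath :: "(real^2 \<Rightarrow> real^2) \<Rightarrow> real \<Rightarrow> complex" where
  "qpath c = r2c \<circ> (c \<circ> ecirc)"

lemma qpath_simple:
  assumes "c \<in> Emb"
  shows "simple_path (qpath c)" "pathfinish (qpath c) = pathstart (qpath c)"
    "path_image (qpath c) = r2c ` (c ` S1)"
proof -
  have cin: "c \<in> Cinf" using assms by (simp add: Emb_def)
  have "path (qpath c)" unfolding path_def qpath_def
    by (rule continuous_on_compose[OF Cinf_cont[OF cin] continuous_on_r2c])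
  moreover have "loop_free (qpath c)"
    unfolding loop_free_def
  proof (intro ballI impI)
    fix x y :: real assume xy: "x \<in> {0..1}" "y \<in> {0..1}" "qpath c x = qpath c y"
    then have "(c \<circ> ecirc) x = (c \<circ> ecirc) y"
      unfolding qpath_def using inj_r2c by (auto dest: injD)
    then obtain n :: int where n: "x = y + of_int n" using Emb_inj[OF assms] by blast
    then have "n \<in> {-1, 0, 1}" using xy by auto
    then show "x = y \<or> x = 0 \<and> y = 1 \<or> x = 1 \<and> y = 0" using n xy by auto
  qed
  ultimately show "simple_path (qpath c)" by (simp add: simple_path_def)
  show "pathfinish (qpath c) = pathstart (qpath c)"
    unfolding pathfinish_def pathstart_def qpath_def
    using ecirc_periodic[of 0] by simp
  show "path_image (qpath c) = r2c ` (c ` S1)"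
    unfolding path_image_def qpath_def by (simp add: Cinf_image image_comp)
qed

lemma Omega_props:
  assumes "c \<in> Emb"
  shows "open (Omega c)" "Omega c \<noteq> {}" "bounded (Omega c)" "frontier (Omega c) = c ` S1"
proof -
  note J = Jordan_inside_outside[OF qpath_simple(1,2)[OF assms]]
  note pim = qpath_simple(3)[OF assms]
  have eq: "r2c ` Omega c = inside (path_image (qpath c))"
    by (simp add: Omega_eq pim inside_r2c)
  have "x \<in> Omega c \<longleftrightarrow> r2c x \<in> r2c ` Omega c" for x
    by (simp add: inj_image_mem_iff[OF inj_r2c])
  then have vim: "Omega c = r2c -` inside (path_image (qpath c))"
    using eq by auto
  show "open (Omega c)"
    unfolding vim using J continuous_on_r2c
    by (metis continuous_on_open_vimage open_UNIV vimage_UNIV Int_UNIV_right)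
  show "Omega c \<noteq> {}" using J eq by auto
  show "bounded (Omega c)" using J eq bounded_r2c_iff by metis
  have "r2c ` frontier (Omega c) = r2c ` (c ` S1)"
    using J by (simp add: frontier_r2c[symmetric] eq pim)
  then show "frontier (Omega c) = c ` S1"
    using inj_r2c by (simp add: inj_image_eq_iff)
qed


lemma open_pos_measure:
  fixes A :: "'a::euclidean_space set"
  assumes "open A" "A \<noteq> {}"
  shows "0 < emeasure lborel A"
proof -
  obtain x where "x \<in> A" using assms by blast
  then obtain a b where ab: "box a b \<subseteq> A" "\<forall>i\<in>Basis. a \<bullet> i < b \<bullet> i"
    using open_contains_box[OF assms(1)] by metis
  have "emeasure lborel (box a b) = (\<Prod>i\<in>Basis. (b - a) \<bullet> i)"
    using ab by (intro emeasure_lborel_box) auto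
  moreover have "0 < (\<Prod>i\<in>Basis. (b - a) \<bullet> i)"
    using ab by (intro prod_pos) (auto simp: inner_diff_left)
  ultimately have "0 < emeasure lborel (box a b)" by simp
  also have "\<dots> \<le> emeasure lborel A"
    using ab assms by (intro emeasure_mono) auto
  finally show ?thesis .
qed

lemma smooth_on_mono: "smooth_on S g \<Longrightarrow> T \<subseteq> S \<Longrightarrow> smooth_on T g"
  unfolding smooth_on_def by blast

lemma periodic_shift:
  fixes p :: "real \<Rightarrow> real^2"
  assumes "\<And>t. p (t + 1) = p t"
  shows "p (t + of_int n) = p t"
proof -
  have pos: "p (t + of_nat m) = p t" for t m
  proof (induction m)
    case (Suc m)
    have "t + of_nat (Suc m) = (t + of_nat m) + 1" by simp
    then show ?case using assms[of "t + of_nat m"] Suc.IH by metis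
  qed simp
  show ?thesis
  proof (cases "n \<ge> 0")
    case True
    then show ?thesis using pos[of t "nat n"] by simp
  next
    case False
    then show ?thesis using pos[of "t + of_int n" "nat (- n)"] by simp
  qed
qed

lemma Emb_smooth_curve:
  assumes "c \<in> Emb"
  shows "smooth_curve_set (c ` S1)"
  unfolding smooth_curve_set_def
proof
  fix P0 assume "P0 \<in> c ` S1"
  define p where "p = c \<circ> ecirc"
  have cin: "c \<in> Cinf" using assms by (simp add: Emb_def)
  have per: "p (t + of_int n) = p t" for t n
    using periodic_shift[of p] by (simp add: p_def)
  have pinj: "p s = p t \<Longrightarrow> \<exists>n::int. s = t + of_int n" for s t
    using Emb_inj[OF assms] by (simp add: p_def)
  have M: "c ` S1 = p ` {0..1}" by (simp add: p_def Cinf_image)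
  then obtain t0 where t0: "P0 = p t0" using \<open>P0 \<in> c ` S1\<close> by blast
  define a where "a = t0 - 1/3"
  define b where "b = t0 + 1/3"
  define C where "C = p ` {b..a+1}"
  define U where "U = - C"
  have pcont: "continuous_on S p" for S using Cinf_cont[OF cin] by (simp add: p_def)
  have "compact C" unfolding C_def by (intro compact_continuous_image pcont) auto
  then have "open U" by (simp add: U_def compact_imp_closed open_Compl)
  have notC: "p s \<notin> C" if "s \<in> {a<..<b}" for s
  proof
    assume "p s \<in> C"
    then obtain r where r: "r \<in> {b..a+1}" "p s = p r" by (auto simp: C_def)
    then obtain n :: int where "s = r + of_int n" using pinj by blast
    moreover have "s - r \<in> {-1<..<0}" using that r by (auto simp: a_def b_def)
    ultimately have "(-1::real) < of_int n" "of_int n < (0::real)" by auto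
    then have "-1 < n" "n < 0" by linarith+
    then show False by linarith
  qed
  have "P0 \<in> U" using notC[of t0] t0 by (auto simp: U_def a_def b_def)
  moreover have "a < b" by (simp add: a_def b_def)
  moreover have "smooth_on {a<..<b} p"
    using cin by (auto simp: Cinf_def p_def intro: smooth_on_mono)
  moreover have "\<forall>t\<in>{a<..<b}. vector_derivative p (at t) \<noteq> 0"
    using assms by (simp add: Emb_def p_def)
  moreover have "\<exists>g. homeomorphism {a<..<b} (c ` S1 \<inter> U) p g"
  proof -
    have injab: "inj_on p {a..b}"
    proof (rule inj_onI)
      fix x y assume xy: "x \<in> {a..b}" "y \<in> {a..b}" "p x = p y"
      then obtain n :: int where n: "x = y + of_int n" using pinj by blast
      then have "\<bar>of_int n\<bar> < (1::real)" using xy by (auto simp: a_def b_def)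
      then have "n = 0" by linarith
      then show "x = y" using n by simp
    qed
    obtain g where g: "homeomorphism {a..b} (p ` {a..b}) p g"
      using homeomorphism_compact[OF compact_Icc pcont refl injab] by blast
    have img: "c ` S1 \<inter> U = p ` {a<..<b}"
    proof
      show "p ` {a<..<b} \<subseteq> c ` S1 \<inter> U"
      proof
        fix y assume "y \<in> p ` {a<..<b}"
        then obtain s where s: "s \<in> {a<..<b}" "y = p s" by blast
        define s' where "s' = s - of_int \<lfloor>s\<rfloor>"
        have "s' \<in> {0..1}" unfolding s'_def using floor_correct[of s] by (simp add: algebra_simps)
        moreover have "p s' = p s" using per[of s "- \<lfloor>s\<rfloor>"] by (simp add: s'_def)
        ultimately have "y \<in> p ` {0..1}" using s by (metis image_eqI)
        then have "y \<in> c ` S1" using M by simp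
        moreover have "y \<in> U" using notC s by (simp add: U_def)
        ultimately show "y \<in> c ` S1 \<inter> U" by blast
      qed
    next
      show "c ` S1 \<inter> U \<subseteq> p ` {a<..<b}"
      proof
        fix y assume y: "y \<in> c ` S1 \<inter> U"
        then obtain s where s: "y = p s" using M by blast
        define s' where "s' = s - of_int \<lfloor>s - a\<rfloor>"
        have s'r: "s' \<in> {a..<a+1}" unfolding s'_def using floor_correct[of "s - a"]
          by (simp add: algebra_simps)
        have ps': "p s' = y" using per[of s "- \<lfloor>s - a\<rfloor>"] s by (simp add: s'_def)
        have "y \<notin> C" using y by (simp add: U_def)
        moreover have "s' \<in> {b..a+1} \<Longrightarrow> y \<in> C" using ps' by (auto simp: C_def)
        moreover have "s' = a \<Longrightarrow> y \<in> C"
          using ps' per[of a 1] by (auto simp: C_def a_def b_def intro!: image_eqI[of _ _ "a+1"])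
        ultimately have "\<not> b \<le> s'" "s' \<noteq> a" using s'r by auto
        then have "s' \<in> {a<..<b}" using s'r by auto
        then show "y \<in> p ` {a<..<b}" using ps' by blast
      qed
    qed
    have "homeomorphism {a<..<b} (p ` {a<..<b}) p g"
      by (rule homeomorphism_of_subsets[OF g]) auto
    then show ?thesis using img by auto
  qed
  ultimately show "\<exists>U a b \<gamma>. open U \<and> P0 \<in> U \<and> a < b \<and> smooth_on {a<..<b} \<gamma> \<and>
      (\<forall>t\<in>{a<..<b}. vector_derivative \<gamma> (at t) \<noteq> 0) \<and>
      (\<exists>g. homeomorphism {a<..<b} (c ` S1 \<inter> U) \<gamma> g)"
    using \<open>open U\<close> by blast
qed

lemma F_in_SP:
  assumes "c \<in> Emb"
  shows "F c \<in> SP"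
proof -
  note O = Omega_props[OF assms]
  have cin: "c \<in> Cinf" using assms by (simp add: Emb_def)
  have "connected ((c \<circ> ecirc) ` {0..1})"
    by (rule connected_continuous_image[OF Cinf_cont[OF cin] connected_Icc])
  then have "connected (c ` S1)" by (simp add: Cinf_image)
  moreover note open_pos_measure[OF O(1,2)] emeasure_bounded_finite[OF O(3)]
      Emb_smooth_curve[OF assms]
  ultimately have "open (Omega c) \<and> 0 < emeasure lborel (Omega c)
          \<and> emeasure lborel (Omega c) < \<infinity> \<and> connected (frontier (Omega c))
          \<and> smooth_curve_set (frontier (Omega c))"
    using O by simp
  then show ?thesis
    unfolding SP_def F_def by blast
qed


section \<open>Stability of the enclosed region\<close>

lemma Omega_vimage:
  assumes "c \<in> Emb"
  shows "Omega c = r2c -` inside (path_image (qpath c))"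
proof -
  have eq: "r2c ` Omega c = inside (path_image (qpath c))"
    by (simp add: Omega_eq qpath_simple(3)[OF assms] inside_r2c)
  have "x \<in> Omega c \<longleftrightarrow> r2c x \<in> r2c ` Omega c" for x
    by (simp add: inj_image_mem_iff[OF inj_r2c])
  then show ?thesis using eq by auto
qed

lemma inside_iff_wn:
  assumes "simple_path g" "pathfinish g = pathstart g" "z \<notin> path_image g"
  shows "z \<in> inside (path_image g) \<longleftrightarrow> winding_number g z \<noteq> 0"
proof
  assume "z \<in> inside (path_image g)"
  then have "norm (winding_number g z) = 1"
    using simple_closed_path_norm_winding_number_inside assms by blast
  then show "winding_number g z \<noteq> 0" by auto
next
  assume wn: "winding_number g z \<noteq> 0"
  show "z \<in> inside (path_image g)"
  proof (rule ccontr)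
    assume "z \<notin> inside (path_image g)"
    then have "z \<in> outside (path_image g)"
      using assms(3) by (metis ComplI UnE inside_Un_outside)
    then have "winding_number g z = 0"
      using winding_number_zero_in_outside assms simple_path_imp_path by blast
    then show False using wn by simp
  qed
qed

lemma Omega_stable:
  assumes c0: "c0 \<in> Emb" and c: "c \<in> Emb"
    and close: "\<And>t. norm ((c \<circ> ecirc) t - (c0 \<circ> ecirc) t) < d"
    and far: "\<And>y. y \<in> c0 ` S1 \<Longrightarrow> d \<le> dist x y"
  shows "x \<in> Omega c \<longleftrightarrow> x \<in> Omega c0"
proof -
  define z where "z = r2c x"
  define q0 where "q0 = qpath c0"
  define q where "q = qpath c"
  have d: "0 < d" using close[of 0] by (meson norm_ge_zero order_le_less_trans)
  note s0 = qpath_simple[OF c0, folded q0_def]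
  note s1 = qpath_simple[OF c, folded q_def]
  have qt: "q t = r2c ((c \<circ> ecirc) t)" "q0 t = r2c ((c0 \<circ> ecirc) t)" for t
    by (simp_all add: q_def q0_def qpath_def)
  have img0: "(c0 \<circ> ecirc) t \<in> c0 ` S1" for t by simp
  have z0: "z \<notin> path_image q0"
  proof
    assume "z \<in> path_image q0"
    then obtain y where "y \<in> c0 ` S1" "z = r2c y" using s0(3) by auto
    then have "x = y" using z_def inj_r2c by (auto dest: injD)
    then show False using far[OF \<open>y \<in> c0 ` S1\<close>] d by simp
  qed
  have z1: "z \<notin> path_image q"
  proof
    assume "z \<in> path_image q"
    then obtain t where "z = q t" by (auto simp: path_image_def)
    then have "x = (c \<circ> ecirc) t" using qt z_def inj_r2c by (auto dest: injD)
    then have "dist x ((c0 \<circ> ecirc) t) < d" using close[of t] by (simp add: dist_norm)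
    then show False using far[OF img0[of t]] by simp
  qed
  have "homotopic_loops (- {z}) q0 q"
  proof (rule homotopic_loops_linear)
    show "path q0" "path q" using s0(1) s1(1) simple_path_imp_path by blast+
    show "pathfinish q0 = pathstart q0" "pathfinish q = pathstart q" using s0(2) s1(2) by auto
    fix t :: real assume "t \<in> {0..1}"
    show "closed_segment (q0 t) (q t) \<subseteq> - {z}"
    proof
      fix w assume w: "w \<in> closed_segment (q0 t) (q t)"
      have "dist w (q0 t) \<le> dist (q0 t) (q t)" using dist_in_closed_segment[OF w] by blast
      also have "\<dots> < d" using close[of t] by (simp add: qt dist_norm norm_minus_commute r2c_minus)
      also have "d \<le> dist z (q0 t)" using far[OF img0[of t]] by (simp add: qt z_def)
      finally show "w \<in> - {z}" by auto
    qed
  qed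
  then have "winding_number q0 z = winding_number q z"
    by (rule winding_number_homotopic_loops)
  moreover have "x \<in> Omega c \<longleftrightarrow> winding_number q z \<noteq> 0"
    using Omega_vimage[OF c] inside_iff_wn[OF s1(1,2) z1] by (simp add: q_def z_def)
  moreover have "x \<in> Omega c0 \<longleftrightarrow> winding_number q0 z \<noteq> 0"
    using Omega_vimage[OF c0] inside_iff_wn[OF s0(1,2) z0] by (simp add: q0_def z_def)
  ultimately show ?thesis by simp
qed


section \<open>Couplings\<close>


lemma sum_measure:
  fixes M N :: "'a measure"
  assumes sN: "sets N = sets M"
  defines "S \<equiv> measure_of (space M) (sets M) (\<lambda>X. emeasure M X + emeasure N X)"
  shows "sets S = sets M" "space S = space M"
    "X \<in> sets M \<Longrightarrow> emeasure S X = emeasure M X + emeasure N X"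
proof -
  have sa: "sigma_algebra (space M) (sets M)" by (rule sets.sigma_algebra_axioms)
  show "sets S = sets M" unfolding S_def by (simp add: sets.sets_measure_of_eq)
  show "space S = space M" unfolding S_def by (simp add: sets.space_closed)
  assume X: "X \<in> sets M"
  have pos: "positive (sets M) (\<lambda>X. emeasure M X + emeasure N X)"
    by (simp add: positive_def)
  have ca: "countably_additive (sets M) (\<lambda>X. emeasure M X + emeasure N X)"
    unfolding countably_additive_def
  proof (intro allI impI)
    fix F :: "nat \<Rightarrow> 'a set"
    assume F: "range F \<subseteq> sets M" "disjoint_family F" "\<Union> (range F) \<in> sets M"
    have F': "range F \<subseteq> sets N" using F sN by simp
    have "(\<Sum>i. emeasure M (F i) + emeasure N (F i)) = (\<Sum>i. emeasure M (F i)) + (\<Sum>i. emeasure N (F i))"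
      by (rule suminf_add[symmetric]) auto
    also have "\<dots> = emeasure M (\<Union> (range F)) + emeasure N (\<Union> (range F))"
      using suminf_emeasure[OF F(1,2)] suminf_emeasure[OF F' F(2)] by simp
    finally show "(\<Sum>i. emeasure M (F i) + emeasure N (F i)) = emeasure M (\<Union> (range F)) + emeasure N (\<Union> (range F))" .
  qed
  show "emeasure S X = emeasure M X + emeasure N X"
    unfolding S_def by (rule emeasure_measure_of_sigma[OF sa pos ca X])
qed


lemma split_uniform:
  fixes A C :: "(real^2) set"
  assumes A[measurable]: "A \<in> sets borel" and C[measurable]: "C \<in> sets borel" and CA: "C \<subseteq> A"
    and pos: "0 < emeasure lborel A" and fin: "emeasure lborel A < \<infinity>"
    and Mx: "measure lborel A \<le> Mx"
  defines "f \<equiv> \<lambda>x. indicator A x / measure lborel A - indicator C x / Mx"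
  shows "\<And>x. 0 \<le> f x"
    "\<And>X. X \<in> sets borel \<Longrightarrow> emeasure (uniform_measure lborel A) X =
        emeasure (density lborel (\<lambda>x. ennreal (indicator C x / Mx))) X
        + emeasure (density lborel (\<lambda>x. ennreal (f x))) X"
    "emeasure (density lborel (\<lambda>x. ennreal (f x))) UNIV = ennreal (1 - measure lborel C / Mx)"
    "emeasure (density lborel (\<lambda>x. ennreal (indicator C x / Mx))) UNIV = ennreal (measure lborel C / Mx)"
proof -
  define a where "a = measure lborel A"
  have eA: "emeasure lborel A = ennreal a"
    using fin by (simp add: a_def emeasure_eq_ennreal_measure)
  have a: "0 < a" using pos eA by simp
  have Mx0: "0 < Mx" using a Mx by (simp add: a_def)
  have eC: "emeasure lborel C = ennreal (measure lborel C)"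
    using fin emeasure_mono[OF CA, of lborel] by (intro emeasure_eq_ennreal_measure) (auto simp: top_unique)
  show f0: "0 \<le> f x" for x
  proof -
    have "1 / Mx \<le> 1 / a" using a Mx by (simp add: a_def frac_le)
    then show ?thesis using CA Mx0 a by (auto simp: f_def a_def[symmetric] indicator_def)
  qed
  have pw: "indicator A x / emeasure lborel A = ennreal (indicator C x / Mx) + ennreal (f x)" for x
  proof -
    have "ennreal (indicator C x / Mx) + ennreal (f x) = ennreal (indicator C x / Mx + f x)"
      using f0[of x] Mx0 by (simp add: ennreal_plus)
    also have "\<dots> = ennreal (indicator A x / a)" by (simp add: f_def a_def)
    also have "\<dots> = ennreal (indicator A x) / ennreal a" using a by (simp add: divide_ennreal)
    finally show ?thesis by (simp add: eA ennreal_indicator)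
  qed
  have fm[measurable]: "f \<in> borel_measurable borel" unfolding f_def by measurable
  show split: "emeasure (uniform_measure lborel A) X =
        emeasure (density lborel (\<lambda>x. ennreal (indicator C x / Mx))) X
        + emeasure (density lborel (\<lambda>x. ennreal (f x))) X" if X[measurable]: "X \<in> sets borel" for X
  proof -
    have "emeasure (uniform_measure lborel A) X = (\<integral>\<^sup>+ x. (indicator A x / emeasure lborel A) * indicator X x \<partial>lborel)"
      unfolding uniform_measure_def by (subst emeasure_density) auto
    also have "\<dots> = (\<integral>\<^sup>+ x. ennreal (indicator C x / Mx) * indicator X x + ennreal (f x) * indicator X x \<partial>lborel)"
      by (simp add: pw distrib_right)
    also have "\<dots> = (\<integral>\<^sup>+ x. ennreal (indicator C x / Mx) * indicator X x \<partial>lborel) + (\<integral>\<^sup>+ x. ennreal (f x) * indicator X x \<partial>lborel)"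
      by (rule nn_integral_add) auto
    also have "\<dots> = emeasure (density lborel (\<lambda>x. ennreal (indicator C x / Mx))) X
        + emeasure (density lborel (\<lambda>x. ennreal (f x))) X"
      by (simp add: emeasure_density)
    finally show ?thesis .
  qed
  show d1: "emeasure (density lborel (\<lambda>x. ennreal (indicator C x / Mx))) UNIV = ennreal (measure lborel C / Mx)"
  proof -
    have "emeasure (density lborel (\<lambda>x. ennreal (indicator C x / Mx))) UNIV
        = (\<integral>\<^sup>+ x. ennreal (1 / Mx) * indicator C x \<partial>lborel)"
      by (subst emeasure_density) (auto intro!: nn_integral_cong simp: indicator_def)
    also have "\<dots> = ennreal (1 / Mx) * emeasure lborel C"
      by (rule nn_integral_cmult_indicator) simp
    also have "\<dots> = ennreal (measure lborel C / Mx)"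
      using Mx0 by (simp add: eC ennreal_mult''[symmetric])
    finally show ?thesis .
  qed
  have tot: "emeasure (uniform_measure lborel A) UNIV = 1"
    using pos fin by (simp add: ennreal_divide_self)
  have "1 = ennreal (measure lborel C / Mx) + emeasure (density lborel (\<lambda>x. ennreal (f x))) UNIV"
    using split[of UNIV] tot d1 by simp
  then have "emeasure (density lborel (\<lambda>x. ennreal (f x))) UNIV = 1 - ennreal (measure lborel C / Mx)"
    by (metis ennreal_add_diff_cancel_left ennreal_neq_top)
  also have "\<dots> = ennreal (1 - measure lborel C / Mx)"
    using Mx0 by (simp add: ennreal_minus[symmetric])
  finally show "emeasure (density lborel (\<lambda>x. ennreal (f x))) UNIV = ennreal (1 - measure lborel C / Mx)" .
qed


lemma sets_borel_pair: "sets (borel \<Otimes>\<^sub>M borel) = sets (borel :: ((real^2) \<times> (real^2)) measure)"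
  by (metis borel_prod)

lemma coupling_bound:
  fixes A B :: "(real^2) set" and R :: real
  assumes A[measurable]: "A \<in> sets borel" and B[measurable]: "B \<in> sets borel"
    and Apos: "0 < emeasure lborel A" and Afin: "emeasure lborel A < \<infinity>"
    and Bpos: "0 < emeasure lborel B" and Bfin: "emeasure lborel B < \<infinity>"
    and AR: "A \<subseteq> cball 0 R" and BR: "B \<subseteq> cball 0 R"
  shows "W2sq (uniform_measure lborel A) (uniform_measure lborel B)
    \<le> ennreal ((2 * R)\<^sup>2 * (1 - measure lborel (A \<inter> B) / max (measure lborel A) (measure lborel B)))"
proof -
  define Mx where "Mx = max (measure lborel A) (measure lborel B)"
  define C where "C = A \<inter> B"
  have C[measurable]: "C \<in> sets borel" by (simp add: C_def)
  define w where "w = 1 - measure lborel C / Mx"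
  define f1 where "f1 = (\<lambda>x. indicator A x / measure lborel A - indicator C x / Mx :: real)"
  define f2 where "f2 = (\<lambda>x. indicator B x / measure lborel B - indicator C x / Mx :: real)"
  define g where "g = (\<lambda>x. ennreal (indicator C x / Mx))"
  define D1 where "D1 = density lborel g"
  define R1 where "R1 = density lborel (\<lambda>x. ennreal (f1 x))"
  define R2 where "R2 = density lborel (\<lambda>x. ennreal (f2 x))"
  define \<mu> where "\<mu> = uniform_measure lborel A"
  define \<nu> where "\<nu> = uniform_measure lborel B"
  note SA = split_uniform[OF A C _ Apos Afin, of Mx, folded f1_def g_def D1_def R1_def]
  note SB = split_uniform[OF B C _ Bpos Bfin, of Mx, folded f2_def g_def D1_def R2_def]
  have CA: "C \<subseteq> A" "C \<subseteq> B" by (auto simp: C_def)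
  have MA: "measure lborel A \<le> Mx" "measure lborel B \<le> Mx" by (auto simp: Mx_def)
  note SA = SA[OF CA(1) MA(1), folded \<mu>_def w_def]
  note SB = SB[OF CA(2) MA(2), folded \<nu>_def w_def]
  have f1m[measurable]: "f1 \<in> borel_measurable borel" unfolding f1_def by measurable
  have f2m[measurable]: "f2 \<in> borel_measurable borel" unfolding f2_def by measurable
  have gm[measurable]: "g \<in> borel_measurable borel" unfolding g_def by measurable
  have w0: "0 \<le> w"
  proof -
    have "emeasure R1 UNIV \<ge> 0" by simp
    have "measure lborel C \<le> measure lborel A"
      using CA Afin by (intro measure_mono_fmeasurable) (auto simp: fmeasurable_def)
    moreover have "0 < measure lborel A"
      using Apos Afin by (simp add: emeasure_eq_ennreal_measure)
    ultimately show ?thesis using MA by (simp add: w_def field_simps)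
  qed
  have sR1: "sets R1 = sets borel" "sets R2 = sets borel" "sets D1 = sets borel"
    by (simp_all add: R1_def R2_def D1_def)
  have R1U: "emeasure R1 UNIV = ennreal w" using SA(3) by (simp add: R1_def f1_def)
  have R2U: "emeasure R2 UNIV = ennreal w" using SB(3) by (simp add: R2_def f2_def)
  have spR2: "space R2 = UNIV" by (simp add: R2_def)
  interpret R2: finite_measure R2
    by (rule finite_measureI) (simp add: spR2 R2U)
  define P where "P = scale_measure (ennreal (1 / w)) (R1 \<Otimes>\<^sub>M R2)"
  have sP: "sets P = sets (borel \<Otimes>\<^sub>M borel)"
    by (simp add: P_def sR1 cong: sets_pair_measure_cong)
  have diag[measurable]: "(\<lambda>x::real^2. (x, x)) \<in> measurable D1 (borel \<Otimes>\<^sub>M borel)"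
    by (simp add: measurable_cong_sets[OF sR1(3) refl])
  define D where "D = distr D1 (borel \<Otimes>\<^sub>M borel) (\<lambda>x. (x, x))"
  have sD: "sets D = sets (borel \<Otimes>\<^sub>M borel)" by (simp add: D_def)
  define \<gamma> where "\<gamma> = measure_of (space D) (sets D) (\<lambda>X. emeasure D X + emeasure P X)"
  note SM = sum_measure[of P D, OF sP[folded sD], folded \<gamma>_def]
  have s\<gamma>: "sets \<gamma> = sets (borel \<Otimes>\<^sub>M borel)" using SM(1) sD by simp
  have sp\<gamma>: "space \<gamma> = UNIV" using SM(2) by (simp add: D_def space_pair_measure)
  have e\<gamma>: "emeasure \<gamma> X = emeasure D X + emeasure P X" if "X \<in> sets (borel \<Otimes>\<^sub>M borel)" for X
    using SM(3) that sD by simp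
  have DX: "emeasure D (X \<times> Y) = emeasure D1 (X \<inter> Y)" if [measurable]: "X \<in> sets borel" "Y \<in> sets borel" for X Y
  proof -
    have "emeasure D (X \<times> Y) = emeasure D1 ((\<lambda>x. (x, x)) -` (X \<times> Y) \<inter> space D1)"
      unfolding D_def by (rule emeasure_distr) auto
    also have "(\<lambda>x. (x, x)) -` (X \<times> Y) \<inter> space D1 = X \<inter> Y" by (auto simp: D1_def)
    finally show ?thesis .
  qed
  have PX: "emeasure P (X \<times> Y) = ennreal (1 / w) * (emeasure R1 X * emeasure R2 Y)"
    if [measurable]: "X \<in> sets borel" "Y \<in> sets borel" for X Y
  proof -
    have "emeasure (R1 \<Otimes>\<^sub>M R2) (X \<times> Y) = emeasure R1 X * emeasure R2 Y"
      by (rule R2.emeasure_pair_measure_Times) (simp_all add: sR1)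
    then show ?thesis by (simp add: P_def)
  qed
  have XU: "X \<times> UNIV \<in> sets (borel \<Otimes>\<^sub>M borel)" "UNIV \<times> X \<in> sets (borel \<Otimes>\<^sub>M borel)"
    if "X \<in> sets borel" for X :: "(real^2) set"
    using that by auto
  have scale: "ennreal (1 / w) * (r * ennreal w) = r" if "r \<le> ennreal w" for r
  proof (cases "w = 0")
    case True
    then show ?thesis using that by simp
  next
    case False
    then have "ennreal (1 / w) * ennreal w = 1" using w0
      by (simp add: ennreal_mult''[symmetric])
    then show ?thesis by (metis mult.assoc mult.commute mult.right_neutral)
  qed
  have R1le: "emeasure R1 X \<le> ennreal w" for X
    using emeasure_space[of R1 X] R1U by (simp add: R1_def)
  have R2le: "emeasure R2 X \<le> ennreal w" for X
    using emeasure_space[of R2 X] R2U by (simp add: spR2)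
  have marg1: "emeasure \<gamma> (X \<times> UNIV) = emeasure \<mu> X" if [measurable]: "X \<in> sets borel" for X
  proof -
    have "emeasure \<gamma> (X \<times> UNIV) = emeasure D1 X + ennreal (1 / w) * (emeasure R1 X * ennreal w)"
      using e\<gamma>[OF XU(1)[OF that]] DX[of X UNIV] PX[of X UNIV] R2U by simp
    also have "\<dots> = emeasure D1 X + emeasure R1 X" using scale[OF R1le] by simp
    also have "\<dots> = emeasure \<mu> X" using SA(2)[OF that] by (simp add: D1_def R1_def f1_def)
    finally show ?thesis .
  qed
  have marg2: "emeasure \<gamma> (UNIV \<times> X) = emeasure \<nu> X" if [measurable]: "X \<in> sets borel" for X
  proof -
    have "emeasure \<gamma> (UNIV \<times> X) = emeasure D1 X + ennreal (1 / w) * (emeasure R2 X * ennreal w)"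
      using e\<gamma>[OF XU(2)[OF that]] DX[of UNIV X] PX[of UNIV X] R1U by (simp add: mult.commute)
    also have "\<dots> = emeasure D1 X + emeasure R2 X" using scale[OF R2le] by simp
    also have "\<dots> = emeasure \<nu> X" using SB(2)[OF that] by (simp add: D1_def R2_def f2_def)
    finally show ?thesis .
  qed
  have "emeasure lborel A / emeasure lborel A = 1"
    using Apos Afin by (intro ennreal_divide_self) auto
  then have "emeasure \<gamma> (space \<gamma>) = 1"
    using marg1[of UNIV] by (simp add: sp\<gamma> \<mu>_def)
  then have prob: "prob_space \<gamma>" by (rule prob_spaceI)
  have fstm: "fst \<in> measurable \<gamma> borel" by (simp add: measurable_cong_sets[OF s\<gamma> refl])
  have sndm: "snd \<in> measurable \<gamma> borel" by (simp add: measurable_cong_sets[OF s\<gamma> refl])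
  have d1: "distr \<gamma> borel fst = \<mu>"
  proof (rule measure_eqI)
    show "sets (distr \<gamma> borel fst) = sets \<mu>" by (simp add: \<mu>_def)
    fix X assume "X \<in> sets (distr \<gamma> borel fst)"
    then have X: "X \<in> sets borel" by simp
    have "emeasure (distr \<gamma> borel fst) X = emeasure \<gamma> (fst -` X \<inter> space \<gamma>)"
      by (rule emeasure_distr[OF fstm X])
    also have "fst -` X \<inter> space \<gamma> = X \<times> UNIV" by (auto simp: sp\<gamma>)
    finally show "emeasure (distr \<gamma> borel fst) X = emeasure \<mu> X" using marg1[OF X] by simp
  qed
  have d2: "distr \<gamma> borel snd = \<nu>"
  proof (rule measure_eqI)
    show "sets (distr \<gamma> borel snd) = sets \<nu>" by (simp add: \<nu>_def)
    fix X assume "X \<in> sets (distr \<gamma> borel snd)"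
    then have X: "X \<in> sets borel" by simp
    have "emeasure (distr \<gamma> borel snd) X = emeasure \<gamma> (snd -` X \<inter> space \<gamma>)"
      by (rule emeasure_distr[OF sndm X])
    also have "snd -` X \<inter> space \<gamma> = UNIV \<times> X" by (auto simp: sp\<gamma>)
    finally show "emeasure (distr \<gamma> borel snd) X = emeasure \<nu> X" using marg2[OF X] by simp
  qed
  have coup: "\<gamma> \<in> couplings \<mu> \<nu>"
    unfolding couplings_def using s\<gamma> prob d1 d2 by blast
  define Off where "Off = {z :: (real^2) \<times> (real^2). fst z \<noteq> snd z}"
  have "open Off"
  proof -
    have "closed {z :: (real^2) \<times> (real^2). fst z = snd z}"
      by (intro closed_Collect_eq continuous_intros)
    then show ?thesis by (simp add: Off_def open_Collect_neg closed_Collect_eq)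
  qed
  then have Offm: "Off \<in> sets (borel \<Otimes>\<^sub>M borel)" unfolding sets_borel_pair by simp
  have R0: "0 \<le> R"
  proof -
    have "A \<noteq> {}" using Apos by auto
    then obtain x where "x \<in> A" by blast
    then have "norm x \<le> R" using AR by (auto simp: mem_cball_0)
    then show ?thesis using norm_ge_zero[of x] by linarith
  qed
  define K where "K = cball (0::real^2) R"
  have Km[measurable]: "K \<in> sets borel" "- K \<in> sets borel" by (simp_all add: K_def)
  have null1: "emeasure \<gamma> ((- K) \<times> UNIV) = 0"
    using marg1[OF Km(2)] AR by (simp add: \<mu>_def K_def Int_absorb2 Diff_eq[symmetric] Diff_eq_empty_iff[THEN iffD2])
  have null2: "emeasure \<gamma> (UNIV \<times> (- K)) = 0"
    using marg2[OF Km(2)] BR by (simp add: \<nu>_def K_def Diff_eq[symmetric] Diff_eq_empty_iff[THEN iffD2])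
  have NN: "(- K) \<times> UNIV \<union> UNIV \<times> (- K) \<in> null_sets \<gamma>"
  proof -
    have m: "(- K) \<times> UNIV \<in> sets \<gamma>" "UNIV \<times> (- K) \<in> sets \<gamma>"
      using XU[OF Km(2)] s\<gamma> by auto
    have "emeasure \<gamma> ((- K) \<times> UNIV \<union> UNIV \<times> (- K)) \<le> emeasure \<gamma> ((- K) \<times> UNIV) + emeasure \<gamma> (UNIV \<times> (- K))"
      by (rule emeasure_subadditive[OF m])
    then show ?thesis using null1 null2 m by (auto intro: null_setsI)
  qed
  have AEb: "AE z in \<gamma>. ennreal ((norm (fst z - snd z))\<^sup>2) \<le> ennreal ((2 * R)\<^sup>2) * indicator Off z"
  proof (rule AE_I'[OF NN])
    show "{z \<in> space \<gamma>. \<not> ennreal ((norm (fst z - snd z))\<^sup>2) \<le> ennreal ((2 * R)\<^sup>2) * indicator Off z}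
        \<subseteq> (- K) \<times> UNIV \<union> UNIV \<times> (- K)"
    proof
      fix z assume z: "z \<in> {z \<in> space \<gamma>. \<not> ennreal ((norm (fst z - snd z))\<^sup>2) \<le> ennreal ((2 * R)\<^sup>2) * indicator Off z}"
      obtain x y where xy: "z = (x, y)" by (cases z)
      have nle: "\<not> ennreal ((norm (x - y))\<^sup>2) \<le> ennreal ((2 * R)\<^sup>2) * indicator Off (x, y)"
        using z xy by simp
      show "z \<in> (- K) \<times> UNIV \<union> UNIV \<times> (- K)"
      proof (rule ccontr)
        assume "z \<notin> (- K) \<times> UNIV \<union> UNIV \<times> (- K)"
        then have xK: "x \<in> K" and yK: "y \<in> K" using xy by auto
        show False
        proof (cases "x = y")
          case True then show False using nle by simp
        next
          case False
          have "norm (x - y) \<le> norm x + norm y" by (rule norm_triangle_ineq4)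
          also have "\<dots> \<le> 2 * R" using xK yK by (simp add: K_def)
          finally have "(norm (x - y))\<^sup>2 \<le> (2 * R)\<^sup>2" by (intro power_mono) auto
          then show False using nle False by (simp add: Off_def ennreal_leI)
        qed
      qed
    qed
  qed
  have "W2sq \<mu> \<nu> \<le> (\<integral>\<^sup>+ z. ennreal ((norm (fst z - snd z))\<^sup>2) \<partial>\<gamma>)"
    unfolding W2sq_def using coup by (rule INF_lower)
  also have "\<dots> \<le> (\<integral>\<^sup>+ z. ennreal ((2 * R)\<^sup>2) * indicator Off z \<partial>\<gamma>)"
    by (rule nn_integral_mono_AE[OF AEb])
  also have "\<dots> = ennreal ((2 * R)\<^sup>2) * emeasure \<gamma> Off"
    using Offm s\<gamma> by (intro nn_integral_cmult_indicator) simp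
  finally have Wle: "W2sq \<mu> \<nu> \<le> ennreal ((2 * R)\<^sup>2) * emeasure \<gamma> Off" .
  have Offle: "emeasure \<gamma> Off \<le> ennreal w"
  proof -
    have "emeasure D Off = emeasure D1 ((\<lambda>x. (x, x)) -` Off \<inter> space D1)"
      unfolding D_def by (rule emeasure_distr[OF diag Offm])
    also have "(\<lambda>x. (x, x)) -` Off \<inter> space D1 = {}" by (auto simp: Off_def)
    finally have D0: "emeasure D Off = 0" by simp
    have "Off \<subseteq> UNIV \<times> UNIV" by simp
    moreover have "UNIV \<times> UNIV \<in> sets P" unfolding sP by (rule pair_measureI) auto
    ultimately have P1: "emeasure P Off \<le> emeasure P (UNIV \<times> UNIV)"
      by (rule emeasure_mono)
    have "emeasure P (UNIV \<times> UNIV) = ennreal (1 / w) * (ennreal w * ennreal w)"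
      using PX[of UNIV UNIV] R1U R2U by simp
    also have "\<dots> = ennreal w" by (rule scale) simp
    finally have "emeasure P Off \<le> ennreal w" using P1 by simp
    then show ?thesis using e\<gamma>[OF Offm] D0 by simp
  qed
  have "W2sq \<mu> \<nu> \<le> ennreal ((2 * R)\<^sup>2) * ennreal w"
    using Wle mult_left_mono[OF Offle, of "ennreal ((2 * R)\<^sup>2)"] by simp
  also have "\<dots> = ennreal ((2 * R)\<^sup>2 * w)" using w0 by (simp add: ennreal_mult'')
  finally show ?thesis by (simp add: \<mu>_def \<nu>_def w_def C_def Mx_def)
qed


lemma K_null:
  assumes "c \<in> Cinf"
  shows "emeasure lborel (c ` S1) = 0"
proof -
  have "(c \<circ> ecirc) differentiable_on {0..1}"
    using Cinf_diff[OF assms] by (simp add: differentiable_at_imp_differentiable_on)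
  then have "negligible ((c \<circ> ecirc) ` {0..1})"
    by (intro negligible_differentiable_image_lowdim) simp_all
  then have N: "c ` S1 \<in> null_sets lebesgue"
    by (simp add: negligible_iff_null_sets Cinf_image)
  have "compact ((c \<circ> ecirc) ` {0..1})"
    by (intro compact_continuous_image Cinf_cont[OF assms]) simp
  then have "c ` S1 \<in> sets lborel"
    by (simp add: Cinf_image compact_imp_closed borel_closed)
  then have "c ` S1 \<in> null_sets lborel" using N null_sets_completion_iff by blast
  then show ?thesis by (simp add: null_sets_def)
qed

lemma w_le:
  fixes a b m x y :: real
  assumes "0 < a" "0 \<le> m" "a = m + x" "b = m + y" "0 \<le> x" "0 \<le> y"
  shows "1 - m / max a b \<le> (x + y) / a"
proof -
  define Mx where "Mx = max a b"
  have Mx: "a \<le> Mx" "0 < Mx" using assms by (auto simp: Mx_def)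
  have "1 - m / Mx = (Mx - m) / Mx" using Mx by (simp add: field_simps)
  also have "\<dots> \<le> (x + y) / Mx" using assms Mx
    by (intro divide_right_mono) (auto simp: Mx_def max_def)
  also have "\<dots> \<le> (x + y) / a" using assms Mx
    by (intro divide_left_mono) auto
  finally show ?thesis by (simp add: Mx_def)
qed


lemma W_small:
  assumes c0: "c0 \<in> Emb" and e: "0 < e"
  shows "\<exists>d>0. \<forall>c\<in>Emb. (\<forall>t. norm ((c \<circ> ecirc) t - (c0 \<circ> ecirc) t) < d)
            \<longrightarrow> W (F c0) (F c) < ennreal e"
proof -
  define K0 where "K0 = c0 ` S1"
  define A where "A = Omega c0"
  have cin0: "c0 \<in> Cinf" using c0 by (simp add: Emb_def)
  note OA = Omega_props[OF c0, folded A_def]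
  have K0c: "compact K0" unfolding K0_def Cinf_image
    by (intro compact_continuous_image Cinf_cont[OF cin0]) simp
  have "bounded (A \<union> K0)" using OA(3) compact_imp_bounded[OF K0c] by simp
  then obtain R0 where "\<forall>x\<in>A \<union> K0. norm x \<le> R0" unfolding bounded_pos by blast
  then have R0: "A \<union> K0 \<subseteq> cball 0 R0" by auto
  define R where "R = R0 + 1"
  define T where "T n = (\<Union>y\<in>K0. ball y (inverse (real (Suc n))))" for n :: nat
  have Topen: "open (T n)" for n unfolding T_def by (rule open_UN) simp
  have Tm[measurable]: "T n \<in> sets borel" for n using Topen by simp
  have Tsub: "T n \<subseteq> cball 0 R" for n
  proof
    fix x assume "x \<in> T n"
    then obtain y where y: "y \<in> K0" "dist y x < inverse (real (Suc n))" by (auto simp: T_def)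
    have "inverse (real (Suc n)) \<le> 1" by (simp add: inverse_le_1_iff)
    then have "dist y x < 1" using y by linarith
    moreover have "y \<in> cball 0 R0" using y(1) R0 by blast
    then have "norm y \<le> R0" by simp
    ultimately have "norm x \<le> R0 + 1"
      using norm_triangle_ineq2[of x y] by (simp add: dist_norm norm_minus_commute)
    then show "x \<in> cball 0 R" by (simp add: R_def)
  qed
  have Tdec: "decseq T"
  proof (rule decseq_SucI)
    fix n
    have "inverse (real (Suc (Suc n))) \<le> inverse (real (Suc n))"
      by (simp add: le_imp_inverse_le)
    then show "T (Suc n) \<subseteq> T n" unfolding T_def by (intro UN_mono subset_ball) auto
  qed
  have Tfin': "emeasure lborel (T n) < \<infinity>" for n
    by (rule emeasure_bounded_finite[OF bounded_subset[OF bounded_cball Tsub]])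
  have Tfin: "emeasure lborel (T n) \<noteq> \<infinity>" for n
    using Tfin'[of n] by simp
  have Tint: "(\<Inter>n. T n) = K0"
  proof
    show "K0 \<subseteq> (\<Inter>n. T n)" by (auto simp: T_def)
    show "(\<Inter>n. T n) \<subseteq> K0"
    proof
      fix x assume x: "x \<in> (\<Inter>n. T n)"
      have "\<exists>y\<in>K0. dist y x < \<epsilon>" if eps: "\<epsilon> > 0" for \<epsilon>
      proof -
        obtain n where n: "inverse (real (Suc n)) < \<epsilon>" using reals_Archimedean[OF eps] by auto
        have "x \<in> T n" using x by blast
        then obtain y where y: "y \<in> K0" "dist y x < inverse (real (Suc n))" by (auto simp: T_def)
        then have "dist y x < \<epsilon>" using n by linarith
        then show ?thesis using y(1) by blast
      qed
      then show "x \<in> K0" using closed_approachable[OF compact_imp_closed[OF K0c]] by blast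
    qed
  qed
  have "(INF n. emeasure lborel (T n)) = emeasure lborel (\<Inter>n. T n)"
    using Tdec Tfin by (intro INF_emeasure_decseq) auto
  then have INF0: "(INF n. emeasure lborel (T n)) = 0"
    using K_null[OF cin0] by (simp add: Tint K0_def)
  define a where "a = measure lborel A"
  have Am[measurable]: "A \<in> sets borel" using OA(1) by simp
  have Apos: "0 < emeasure lborel A" by (rule open_pos_measure[OF OA(1,2)])
  have Afin: "emeasure lborel A < \<infinity>" by (rule emeasure_bounded_finite[OF OA(3)])
  have eA: "emeasure lborel A = ennreal a"
    using Afin by (simp add: a_def emeasure_eq_ennreal_measure)
  have a0: "0 < a" using Apos eA by simp
  define Q where "Q = (2 * R)\<^sup>2"
  have Q0: "0 \<le> Q" by (simp add: Q_def)
  define \<eta> where "\<eta> = e\<^sup>2 * a / (Q + 1)"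
  have \<eta>0: "0 < \<eta>" using e a0 Q0 by (simp add: \<eta>_def)
  have "(INF n. emeasure lborel (T n)) < ennreal \<eta>" using INF0 \<eta>0 by simp
  then obtain n where n: "emeasure lborel (T n) < ennreal \<eta>" by (auto simp: INF_less_iff)
  define d where "d = inverse (real (Suc n))"
  have d0: "0 < d" by (simp add: d_def)
  have mT: "measure lborel (T n) < \<eta>"
    using n Tfin[of n] by (simp add: emeasure_eq_ennreal_measure ennreal_less_iff)
  show ?thesis
  proof (intro exI[of _ d] conjI ballI impI)
    show "0 < d" by (rule d0)
    fix c assume c: "c \<in> Emb" and close: "\<forall>t. norm ((c \<circ> ecirc) t - (c0 \<circ> ecirc) t) < d"
    define B where "B = Omega c"
    note OB = Omega_props[OF c, folded B_def]
    have Bm[measurable]: "B \<in> sets borel" using OB(1) by simp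
    have Bpos: "0 < emeasure lborel B" by (rule open_pos_measure[OF OB(1,2)])
    have Bfin: "emeasure lborel B < \<infinity>" by (rule emeasure_bounded_finite[OF OB(3)])
    have same: "x \<in> B \<longleftrightarrow> x \<in> A" if "x \<notin> T n" for x
    proof -
      have "d \<le> dist x y" if "y \<in> c0 ` S1" for y
      proof (rule ccontr)
        assume "\<not> d \<le> dist x y"
        then have "x \<in> ball y d" by (simp add: dist_commute)
        then have "x \<in> T n" using that by (auto simp: T_def d_def K0_def)
        then show False using \<open>x \<notin> T n\<close> by simp
      qed
      then show ?thesis
        unfolding A_def B_def by (rule Omega_stable[OF c0 c close[rule_format]])
    qed
    have sd: "(A - B) \<union> (B - A) \<subseteq> T n" using same by blast
    have AR: "A \<subseteq> cball 0 R" using R0 by (auto simp: R_def)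
    have BR: "B \<subseteq> cball 0 R"
    proof
      fix x assume "x \<in> B"
      show "x \<in> cball 0 R"
      proof (cases "x \<in> A")
        case True then show ?thesis using AR by auto
      next
        case False then have "x \<in> T n" using \<open>x \<in> B\<close> same by blast
        then show ?thesis using Tsub[of n] by blast
      qed
    qed
    define m where "m = measure lborel (A \<inter> B)"
    define b where "b = measure lborel B"
    have Bfin': "emeasure lborel B \<noteq> \<infinity>" using Bfin by simp
    have Afin': "emeasure lborel A \<noteq> \<infinity>" using Afin by simp
    have xa: "measure lborel (A - B) = a - m"
    proof -
      have "measure lborel (A - (A \<inter> B)) = measure lborel A - measure lborel (A \<inter> B)"
        using Afin' by (intro measure_Diff) auto
      moreover have "A - (A \<inter> B) = A - B" by auto
      ultimately show ?thesis by (simp add: a_def m_def)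
    qed
    have yb: "measure lborel (B - A) = b - m"
    proof -
      have "measure lborel (B - (A \<inter> B)) = measure lborel B - measure lborel (A \<inter> B)"
        using Bfin' by (intro measure_Diff) auto
      moreover have "B - (A \<inter> B) = B - A" by auto
      ultimately show ?thesis by (simp add: b_def m_def)
    qed
    have fA: "emeasure lborel (A - B) \<noteq> \<infinity>"
      using emeasure_mono[of "A - B" A lborel] Afin' by (auto simp: top_unique)
    have fB: "emeasure lborel (B - A) \<noteq> \<infinity>"
      using emeasure_mono[of "B - A" B lborel] Bfin' by (auto simp: top_unique)
    have "measure lborel (A - B) + measure lborel (B - A) = measure lborel ((A - B) \<union> (B - A))"
      using fA fB by (intro measure_Union[symmetric]) auto
    also have "\<dots> \<le> measure lborel (T n)"
      using sd Tfin[of n] by (intro measure_mono_fmeasurable) (auto simp: fmeasurable_def less_top)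
    finally have sdle: "measure lborel (A - B) + measure lborel (B - A) \<le> measure lborel (T n)" .
    have wle: "1 - m / max a b \<le> (measure lborel (A - B) + measure lborel (B - A)) / a"
    proof (rule w_le)
      have "0 \<le> measure lborel (A - B)" "0 \<le> measure lborel (B - A)" by simp_all
      then show "0 \<le> measure lborel (A - B)" "0 \<le> measure lborel (B - A)"
        "a = m + measure lborel (A - B)" "b = m + measure lborel (B - A)"
        using xa yb by simp_all
      show "0 < a" by (rule a0)
      show "0 \<le> m" by (simp add: m_def)
    qed
    have cb: "W2sq (F c0) (F c) \<le> ennreal (Q * (1 - m / max a b))"
      using coupling_bound[OF Am Bm Apos Afin Bpos Bfin AR BR]
      by (simp add: F_def A_def[symmetric] B_def[symmetric] Q_def m_def a_def b_def)
    have "(measure lborel (A - B) + measure lborel (B - A)) / a \<le> measure lborel (T n) / a"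
      using sdle a0 by (intro divide_right_mono) auto
    then have "1 - m / max a b \<le> measure lborel (T n) / a" using wle by linarith
    then have "Q * (1 - m / max a b) \<le> Q * (measure lborel (T n) / a)"
      using Q0 by (rule mult_left_mono)
    also have "\<dots> \<le> Q * (\<eta> / a)"
      using mT a0 Q0 by (intro mult_left_mono divide_right_mono) auto
    also have "\<dots> = e\<^sup>2 * (Q / (Q + 1))"
    proof -
      have "\<eta> / a = e\<^sup>2 / (Q + 1)" using a0 by (simp add: \<eta>_def)
      then show ?thesis by simp
    qed
    also have "\<dots> < e\<^sup>2 * 1"
    proof (rule mult_strict_left_mono)
      show "Q / (Q + 1) < 1" using Q0 by simp
      show "0 < e\<^sup>2" using e by simp
    qed
    finally have V: "Q * (1 - m / max a b) < e\<^sup>2" by simp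
    have "ennreal (Q * (1 - m / max a b)) < ennreal (e\<^sup>2)"
      by (rule ennreal_lessI[OF _ V]) (use e in simp)
    with cb have lt: "W2sq (F c0) (F c) < ennreal (e\<^sup>2)" by (rule order.strict_trans1)
    have "W2sq (F c0) (F c) < \<top>" using lt ennreal_less_top by (rule order.strict_trans)
    then have ntop: "W2sq (F c0) (F c) \<noteq> \<infinity>" by simp
    have "enn2real (W2sq (F c0) (F c)) < e\<^sup>2"
      using lt ntop by (simp add: less_top)
    then have "sqrt (enn2real (W2sq (F c0) (F c))) < sqrt (e\<^sup>2)"
      by (rule real_sqrt_less_mono)
    then have "sqrt (enn2real (W2sq (F c0) (F c))) < e" using e by simp
    then show "W (F c0) (F c) < ennreal e"
      unfolding W_def using ntop by (simp add: ennreal_less_iff)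
  qed
qed


definition Ef :: "real^2 \<Rightarrow> real^2 \<Rightarrow> real \<Rightarrow> real^2" where
  "Ef u v t = cos (2 * pi * t) *\<^sub>R u + sin (2 * pi * t) *\<^sub>R v"

lemma Ef_deriv: "(Ef u v has_vector_derivative Ef ((2 * pi) *\<^sub>R v) (- (2 * pi) *\<^sub>R u) t) (at t)"
proof -
  have c: "((\<lambda>t. cos (2 * pi * t)) has_field_derivative (- sin (2 * pi * t) * (2 * pi))) (at t)"
    by (auto intro!: derivative_eq_intros)
  have s: "((\<lambda>t. sin (2 * pi * t)) has_field_derivative (cos (2 * pi * t) * (2 * pi))) (at t)"
    by (auto intro!: derivative_eq_intros)
  have "((\<lambda>t. cos (2 * pi * t) *\<^sub>R u + sin (2 * pi * t) *\<^sub>R v) has_vector_derivative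
      (cos (2 * pi * t) *\<^sub>R 0 + (- sin (2 * pi * t) * (2 * pi)) *\<^sub>R u)
      + (sin (2 * pi * t) *\<^sub>R 0 + (cos (2 * pi * t) * (2 * pi)) *\<^sub>R v)) (at t)"
    by (intro has_vector_derivative_add has_vector_derivative_scaleR c s has_vector_derivative_const)
  moreover have "(cos (2 * pi * t) *\<^sub>R 0 + (- sin (2 * pi * t) * (2 * pi)) *\<^sub>R u)
      + (sin (2 * pi * t) *\<^sub>R 0 + (cos (2 * pi * t) * (2 * pi)) *\<^sub>R v)
      = Ef ((2 * pi) *\<^sub>R v) (- (2 * pi) *\<^sub>R u) t"
    by (simp add: Ef_def algebra_simps)
  ultimately show ?thesis unfolding Ef_def[abs_def] by simp
qed

lemma Dk_ecirc: "\<exists>u v. Dk k ecirc = Ef u v"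
proof (induction k)
  case 0
  have "ecirc = Ef (vector [1, 0]) (vector [0, 1])"
    by (rule ext) (simp add: ecirc_def Ef_def vec_eq_iff forall_2)
  then show ?case by auto
next
  case (Suc k)
  then obtain u v where uv: "Dk k ecirc = Ef u v" by blast
  have "Dk (Suc k) ecirc = Ef ((2 * pi) *\<^sub>R v) (- (2 * pi) *\<^sub>R u)"
    by (rule ext) (simp add: uv vector_derivative_at[OF Ef_deriv])
  then show ?case by blast
qed

lemma smooth_ecirc: "smooth_on UNIV ecirc"
  unfolding smooth_on_def
proof (intro allI ballI)
  fix k t
  obtain u v where "Dk k ecirc = Ef u v" using Dk_ecirc by blast
  then show "Dk k ecirc differentiable (at t)"
    using Ef_deriv differentiableI_vector by metis
qed


lemma id_Diff: "id \<in> Diff"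
proof -
  have "inv_into S1 id \<circ> ecirc = ecirc"
  proof
    fix t
    have "inv_into S1 id (ecirc t) = ecirc t"
      using inv_into_f_f[of id S1 "ecirc t"] by simp
    then show "(inv_into S1 id \<circ> ecirc) t = ecirc t" by simp
  qed
  then show ?thesis unfolding Diff_def using smooth_ecirc by simp
qed

lemma cls_img: "d \<in> cls c \<Longrightarrow> d ` S1 = c ` S1"
proof -
  assume "d \<in> cls c"
  then obtain \<phi> where \<phi>: "\<phi> \<in> Diff" "d = restrict (c \<circ> \<phi>) S1" by (auto simp: cls_def)
  then have "\<phi> ` S1 = S1" by (simp add: Diff_def bij_betw_def)
  have "d ` S1 = (c \<circ> \<phi>) ` S1" using \<phi>(2) by (force simp: restrict_def)
  also have "\<dots> = c ` (\<phi> ` S1)" by (simp add: image_comp)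
  finally show ?thesis using \<open>\<phi> ` S1 = S1\<close> by simp
qed

lemma FB_cls: "FB (cls c) = F c"
proof -
  have "restrict (c \<circ> id) S1 \<in> cls c" using id_Diff unfolding cls_def by blast
  then have "(SOME d. d \<in> cls c) \<in> cls c" by (rule someI[of "\<lambda>d. d \<in> cls c"])
  then have "(SOME d. d \<in> cls c) ` S1 = c ` S1" by (rule cls_img)
  then show ?thesis by (simp add: FB_def F_def Omega_def)
qed

lemma openin_B_top: "openin B_top U \<longleftrightarrow> U \<subseteq> Bset \<and> openin Emb_top {c \<in> Emb. cls c \<in> U}"
  unfolding B_top_def using istopology_B by simp

lemma openin_SP_top: "openin SP_top U \<longleftrightarrow> U \<subseteq> SP \<and>
      (\<forall>\<mu>\<in>U. \<exists>\<epsilon>>0. {\<nu> \<in> SP. W \<mu> \<nu> < ennreal \<epsilon>} \<subseteq> U)"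
  unfolding SP_top_def using istopology_SP by simp

definition ball0 :: "(real^2 \<Rightarrow> real^2) \<Rightarrow> real \<Rightarrow> (real^2 \<Rightarrow> real^2) set" where
  "ball0 c0 r = {c \<in> Cinf. (SUP t. norm (Dk 0 (c \<circ> ecirc) t - Dk 0 (c0 \<circ> ecirc) t)) < r}"

lemma openin_ball0: "c0 \<in> Cinf \<Longrightarrow> r > 0 \<Longrightarrow> openin Cinf_top (ball0 c0 r)"
  unfolding Cinf_top_def ball0_def by (rule topology_generated_by_Basis) blast

lemma center_ball0: "c0 \<in> Cinf \<Longrightarrow> r > 0 \<Longrightarrow> c0 \<in> ball0 c0 r"
  by (simp add: ball0_def)

lemma topspace_Emb_top: "topspace Emb_top = Emb"
proof -
  have "Emb \<subseteq> topspace Cinf_top"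
  proof
    fix c assume "c \<in> Emb"
    then have "c \<in> Cinf" by (simp add: Emb_def)
    then show "c \<in> topspace Cinf_top"
      using openin_ball0[of c 1] center_ball0[of c 1] openin_subset by fastforce
  qed
  then show ?thesis by (simp add: Emb_top_def inf.absorb2)
qed

lemma topspace_B_top: "topspace B_top = Bset"
proof -
  have "openin B_top Bset"
  proof -
    have "{c \<in> Emb. cls c \<in> Bset} = Emb" by (auto simp: Bset_def)
    then show ?thesis using openin_topspace[of Emb_top]
      by (simp add: openin_B_top topspace_Emb_top)
  qed
  then show ?thesis using openin_B_top by (auto simp: topspace_def)
qed

lemma topspace_SP_top: "topspace SP_top = SP"
proof -
  have "openin SP_top SP" by (auto simp: openin_SP_top intro: exI[of _ 1])
  then show ?thesis using openin_SP_top by (auto simp: topspace_def)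
qed

lemma Cinf_bdd:
  assumes "c \<in> Cinf" "c0 \<in> Cinf"
  shows "bdd_above (range (\<lambda>t. norm ((c \<circ> ecirc) t - (c0 \<circ> ecirc) t)))"
proof -
  define f where "f = (\<lambda>t. norm ((c \<circ> ecirc) t - (c0 \<circ> ecirc) t))"
  have per: "f (t + of_int n) = f t" for t n
  proof -
    have "(c \<circ> ecirc) (t + of_int n) = (c \<circ> ecirc) t" "(c0 \<circ> ecirc) (t + of_int n) = (c0 \<circ> ecirc) t"
      by (simp_all add: ecirc_periodic_int)
    then show ?thesis by (simp add: f_def)
  qed
  have "range f \<subseteq> f ` {0..1}"
  proof
    fix y assume "y \<in> range f"
    then obtain t where t: "y = f t" by blast
    define s where "s = t - of_int \<lfloor>t\<rfloor>"
    have "s \<in> {0..1}" unfolding s_def using floor_correct[of t] by (simp add: algebra_simps)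
    moreover have "f s = f t" using per[of t "- \<lfloor>t\<rfloor>"] by (simp add: s_def)
    ultimately show "y \<in> f ` {0..1}" using t by (metis image_eqI)
  qed
  moreover have "continuous_on {0..1} f"
    unfolding f_def
    by (intro continuous_on_norm continuous_on_diff Cinf_cont[OF assms(1)] Cinf_cont[OF assms(2)])
  then have "compact (f ` {0..1})" by (intro compact_continuous_image) auto
  ultimately have "bounded (range f)" by (meson bounded_subset compact_imp_bounded)
  then show ?thesis unfolding f_def by (rule bounded_imp_bdd_above)
qed

theorem mainTheorem10:
  shows "continuous_map B_top SP_top FB"
  unfolding continuous_map_def
proof (intro conjI allI impI)
  show "FB \<in> topspace B_top \<rightarrow> topspace SP_top"
  proof
    fix X assume "X \<in> topspace B_top"
    then obtain c where "c \<in> Emb" "X = cls c" by (auto simp: topspace_B_top Bset_def)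
    then show "FB X \<in> topspace SP_top" by (simp add: FB_cls F_in_SP topspace_SP_top)
  qed
  fix U assume U: "openin SP_top U"
  have eq: "{c \<in> Emb. cls c \<in> {X \<in> topspace B_top. FB X \<in> U}} = {c \<in> Emb. F c \<in> U}"
    by (auto simp: topspace_B_top Bset_def FB_cls)
  have "openin Emb_top {c \<in> Emb. F c \<in> U}"
  proof (subst openin_subopen, intro ballI)
    fix c0 assume c0: "c0 \<in> {c \<in> Emb. F c \<in> U}"
    then have c0E: "c0 \<in> Emb" and c0U: "F c0 \<in> U" by auto
    have cin0: "c0 \<in> Cinf" using c0E by (simp add: Emb_def)
    obtain e where e: "e > 0" "{\<nu> \<in> SP. W (F c0) \<nu> < ennreal e} \<subseteq> U"
      using U c0U by (auto simp: openin_SP_top)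
    obtain d where d: "d > 0" "\<forall>c\<in>Emb. (\<forall>t. norm ((c \<circ> ecirc) t - (c0 \<circ> ecirc) t) < d)
            \<longrightarrow> W (F c0) (F c) < ennreal e"
      using W_small[OF c0E e(1)] by blast
    define T where "T = ball0 c0 d \<inter> Emb"
    have "openin Emb_top T"
      unfolding T_def Emb_top_def openin_subtopology using openin_ball0[OF cin0 d(1)] by blast
    moreover have "c0 \<in> T" using center_ball0[OF cin0 d(1)] c0E by (simp add: T_def)
    moreover have "T \<subseteq> {c \<in> Emb. F c \<in> U}"
    proof
      fix c assume c: "c \<in> T"
      then have cE: "c \<in> Emb" and cC: "c \<in> Cinf" and
        sup: "(SUP t. norm ((c \<circ> ecirc) t - (c0 \<circ> ecirc) t)) < d"
        by (auto simp: T_def ball0_def Emb_def)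
      have "norm ((c \<circ> ecirc) t - (c0 \<circ> ecirc) t) < d" for t
        using cSUP_upper[OF UNIV_I Cinf_bdd[OF cC cin0], of t] sup by linarith
      then have "W (F c0) (F c) < ennreal e" using d(2) cE by blast
      then show "c \<in> {c \<in> Emb. F c \<in> U}" using e(2) F_in_SP[OF cE] cE by blast
    qed
    ultimately show "\<exists>T. openin Emb_top T \<and> c0 \<in> T \<and> T \<subseteq> {c \<in> Emb. F c \<in> U}" by blast
  qed
  then show "openin B_top {X \<in> topspace B_top. FB X \<in> U}"
    unfolding openin_B_top using eq by (simp add: topspace_B_top)
qed

end
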